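(* The Hilbert calculus ${\bf Tmd}$ is sound and complete with respect to the Nmatrix $\mathcal M_{\bf Tmd}$: for every $\Gamma\cup\{\alpha\}\subseteq For$, $\Gamma\vdash_{\bf Tmd}\alpha$ iff $\Gamma\vDash_{\mathcal M_{\bf Tmd}}\alpha$.
   Context: Formulas are built from a denumerable set of propositional variables by the unary connectives $\neg$, $\Box$ and the binary connective $\to$; $For$ is the set of all formulas. Abbreviations: $\Diamond\alpha:=\neg\Box\neg\alpha$, $\alpha\vee\beta:=\neg\alpha\to\beta$. ${\bf Tmd}$ is the Hilbert calculus whose axioms are all instances (over $For$) of the axiom schemas of a standard Hilbert calculus for classical propositional logic in the signature $\{\neg,\to\}$, plus all instances of: (K) $\Box(\alpha\to\beta)\to(\Box\alpha\to\Box\beta)$; (Kdet) $\Box(\alpha\to\beta)\to(\Diamond\alpha\to\Box\beta)$; (K2) $\Diamond(\alpha\to\beta)\to(\Box\alpha\to\Diamond\beta)$; (M1) $\neg\Diamond\alpha\to\Box(\alpha\to\beta)$; (M2) $\Box\beta\to\Box(\alpha\to\beta)$; (M3) $\Diamond\beta\to\Diamond(\alpha\to\beta)$; (M4) $\Diamond\neg\alpha\to\Diamond(\alpha\to\beta)$; (T) $\Box\alpha\to\alpha$; (DN1) $\Box\alpha\to\Box\neg\neg\alpha$; (DN2) $\Box\neg\neg\alpha\to\Box\alpha$; modus ponens is the only rule. Nmatrix semantics: an Nmatrix has a domain $A$, designated values $D\subseteq A$ and, for each connective, a multioperation giving nonempty subsets of $A$; a valuation is $v:For\to A$ with $v(\neg\alpha)\in\tilde\neg(v(\alpha))$,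 $v(\Box\alpha)\in\tilde\Box(v(\alpha))$, $v(\alpha\to\beta)\in v(\alpha)\tilde\to v(\beta)$; $\Gamma\vDash\alpha$ iff every valuation designating all of $\Gamma$ designates $\alpha$. $\mathcal M_{\bf Tmd}$: domain $\{T^+,C^+,C^-,F^-\}$, designated $\{T^+,C^+\}$; $\tilde\neg T^+=\{F^-\}$, $\tilde\neg C^+=\{C^-\}$, $\tilde\neg C^-=\{C^+\}$, $\tilde\neg F^-=\{T^+\}$; $\tilde\Box T^+=\{T^+,C^+\}$ and $\tilde\Box x=\{C^-,F^-\}$ for $x\neq T^+$; implication is deterministic: $x\tilde\to y=\{\max(n(x),y)\}$, where $n(T^+)=F^-$, $n(C^+)=C^-$, $n(C^-)=C^+$, $n(F^-)=T^+$ and the maximum is taken in the chain $F^-<C^-<C^+<T^+$. *)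

theory Defs
  imports Main
begin

datatype fm = Var nat | Neg fm | Box fm | Imp fm fm

definition Dia :: "fm \<Rightarrow> fm" where "Dia a = Neg (Box (Neg a))"
definition Disj :: "fm \<Rightarrow> fm \<Rightarrow> fm" where "Disj a b = Imp (Neg a) b"

text \<open>Axioms of Tmd: a standard Hilbert calculus for classical propositional logic
 in the signature {neg, imp} (Mendelson's A1-A3), plus the modal schemas.\<close>
inductive Ax :: "fm \<Rightarrow> bool" where
  A1: "Ax (Imp a (Imp b a))"
| A2: "Ax (Imp (Imp a (Imp b c)) (Imp (Imp a b) (Imp a c)))"
| A3: "Ax (Imp (Imp (Neg b) (Neg a)) (Imp (Imp (Neg b) a) b))"
| K: "Ax (Imp (Box (Imp a b)) (Imp (Box a) (Box b)))"
| Kdet: "Ax (Imp (Box (Imp a b)) (Imp (Dia a) (Box b)))"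
| K2: "Ax (Imp (Dia (Imp a b)) (Imp (Box a) (Dia b)))"
| M1: "Ax (Imp (Neg (Dia a)) (Box (Imp a b)))"
| M2: "Ax (Imp (Box b) (Box (Imp a b)))"
| M3: "Ax (Imp (Dia b) (Dia (Imp a b)))"
| M4: "Ax (Imp (Dia (Neg a)) (Dia (Imp a b)))"
| T: "Ax (Imp (Box a) a)"
| DN1: "Ax (Imp (Box a) (Box (Neg (Neg a))))"
| DN2: "Ax (Imp (Box (Neg (Neg a))) (Box a))"

inductive derivable :: "fm set \<Rightarrow> fm \<Rightarrow> bool" (infix "\<turnstile>\<^sub>T\<^sub>m\<^sub>d" 50) where
  hyp: "a \<in> \<Gamma> \<Longrightarrow> \<Gamma> \<turnstile>\<^sub>T\<^sub>m\<^sub>d a"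
| ax: "Ax a \<Longrightarrow> \<Gamma> \<turnstile>\<^sub>T\<^sub>m\<^sub>d a"
| mp: "\<Gamma> \<turnstile>\<^sub>T\<^sub>m\<^sub>d a \<Longrightarrow> \<Gamma> \<turnstile>\<^sub>T\<^sub>m\<^sub>d Imp a b \<Longrightarrow> \<Gamma> \<turnstile>\<^sub>T\<^sub>m\<^sub>d b"

text \<open>The Nmatrix M_Tmd. Constructor order realises the chain F- < C- < C+ < T+.\<close>
datatype tv = Fm | Cm | Cp | Tp

fun rank :: "tv \<Rightarrow> nat" where
  "rank Fm = 0" | "rank Cm = 1" | "rank Cp = 2" | "rank Tp = 3"

definition tmax :: "tv \<Rightarrow> tv \<Rightarrow> tv" where
  "tmax x y = (if rank x \<le> rank y then y else x)"

definition designated :: "tv set" where "designated = {Tp, Cp}"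

fun nneg :: "tv \<Rightarrow> tv" where
  "nneg Tp = Fm" | "nneg Cp = Cm" | "nneg Cm = Cp" | "nneg Fm = Tp"

definition negM :: "tv \<Rightarrow> tv set" where "negM x = {nneg x}"

definition boxM :: "tv \<Rightarrow> tv set" where
  "boxM x = (if x = Tp then {Tp, Cp} else {Cm, Fm})"

definition impM :: "tv \<Rightarrow> tv \<Rightarrow> tv set" where
  "impM x y = {tmax (nneg x) y}"

definition valuation :: "(fm \<Rightarrow> tv) \<Rightarrow> bool" where
  "valuation v \<longleftrightarrow>
     (\<forall>a. v (Neg a) \<in> negM (v a)) \<and>
     (\<forall>a. v (Box a) \<in> boxM (v a)) \<and>
     (\<forall>a b. v (Imp a b) \<in> impM (v a) (v b))"

definition entails :: "fm set \<Rightarrow> fm \<Rightarrow> bool" (infix "\<Turnstile>\<^sub>M" 50) where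
  "\<Gamma> \<Turnstile>\<^sub>M a \<longleftrightarrow>
     (\<forall>v. valuation v \<longrightarrow> (\<forall>g\<in>\<Gamma>. v g \<in> designated) \<longrightarrow> v a \<in> designated)"

end

theory Submission
  imports Defs
begin

lemma MP: "derivable G (Imp a b) \<Longrightarrow> derivable G a \<Longrightarrow> derivable G b"
  by (rule mp)

lemma HY: "a \<in> G \<Longrightarrow> derivable G a" by (rule hyp)

lemma AX: "Ax a \<Longrightarrow> derivable G a" by (rule ax)

lemma A1': "derivable G (Imp a (Imp b a))" by (rule ax, rule Ax.A1)
lemma A2': "derivable G (Imp (Imp a (Imp b c)) (Imp (Imp a b) (Imp a c)))" by (rule ax, rule Ax.A2)
lemma A3': "derivable G (Imp (Imp (Neg b) (Neg a)) (Imp (Imp (Neg b) a) b))" by (rule ax, rule Ax.A3)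

lemma mono: "derivable G a \<Longrightarrow> G \<subseteq> H \<Longrightarrow> derivable H a"
  by (induction rule: derivable.induct) (auto intro: derivable.intros)

lemma imp_self: "derivable G (Imp a a)"
proof -
  have "derivable G (Imp (Imp a (Imp (Imp a a) a)) (Imp (Imp a (Imp a a)) (Imp a a)))" by (rule A2')
  then have "derivable G (Imp (Imp a (Imp a a)) (Imp a a))" using MP[OF _ A1'] by blast
  then show ?thesis using MP[OF _ A1'] by blast
qed

lemma DT0: "derivable D b \<Longrightarrow> derivable (D - {a}) (Imp a b)"
proof (induction rule: derivable.induct)
  case (hyp x \<Gamma>)
  then show ?case
  proof (cases "x = a")
    case True then show ?thesis using imp_self by simp
  next
    case False then have "derivable (\<Gamma> - {a}) x" using hyp by (intro HY) simp
    then show ?thesis by (rule MP[OF A1'])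
  qed
next
  case (ax x \<Gamma>)
  then have "derivable (\<Gamma> - {a}) x" by (rule AX)
  then show ?case by (rule MP[OF A1'])
next
  case (mp \<Gamma> x y)
  then show ?case using MP[OF MP[OF A2']] by blast
qed

lemma DT: "derivable (insert a G) b \<Longrightarrow> derivable G (Imp a b)"
  using DT0 mono by blast

lemma neg_imp: "derivable G (Imp (Neg a) (Imp a b))"
proof -
  let ?H = "insert a (insert (Neg a) G)"
  have 1: "derivable ?H (Imp (Neg b) (Neg a))" by (rule MP[OF A1'], rule HY, simp)
  have 2: "derivable ?H (Imp (Neg b) a)" by (rule MP[OF A1'], rule HY, simp)
  have "derivable ?H b" using MP[OF MP[OF A3' 1] 2] .
  then show ?thesis by (intro DT)
qed

lemma dne: "derivable G (Imp (Neg (Neg b)) b)"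
proof -
  let ?H = "insert (Neg (Neg b)) G"
  have 1: "derivable ?H (Imp (Neg b) (Neg (Neg b)))" by (rule MP[OF A1'], rule HY, simp)
  have 2: "derivable ?H (Imp (Neg b) (Neg b))" by (rule imp_self)
  have "derivable ?H b" using MP[OF MP[OF A3' 1] 2] .
  then show ?thesis by (intro DT)
qed

lemma dni: "derivable G (Imp b (Neg (Neg b)))"
proof -
  let ?H = "insert b G"
  have 1: "derivable ?H (Imp (Neg (Neg (Neg b))) (Neg b))" by (rule dne)
  have 2: "derivable ?H (Imp (Neg (Neg (Neg b))) b)" by (rule MP[OF A1'], rule HY, simp)
  have "derivable ?H (Neg (Neg b))" using MP[OF MP[OF A3' 1] 2] .
  then show ?thesis by (intro DT)
qed

lemma contrapos: "derivable G (Imp (Imp a b) (Imp (Neg b) (Neg a)))"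
proof -
  let ?H = "insert (Neg b) (insert (Imp a b) G)"
  have 1: "derivable ?H (Imp (Neg (Neg a)) (Neg b))" by (rule MP[OF A1'], rule HY, simp)
  have "derivable (insert (Neg (Neg a)) ?H) b"
  proof -
    have "derivable (insert (Neg (Neg a)) ?H) a" by (rule MP[OF dne], rule HY, simp)
    then show ?thesis by (rule MP[rotated], intro HY, simp)
  qed
  then have 2: "derivable ?H (Imp (Neg (Neg a)) b)" by (rule DT)
  have "derivable ?H (Neg a)" using MP[OF MP[OF A3' 1] 2] .
  then show ?thesis by (intro DT)
qed

lemma cases_lem: "derivable G (Imp a b) \<Longrightarrow> derivable G (Imp (Neg a) b) \<Longrightarrow> derivable G b"
proof -
  assume h1: "derivable G (Imp a b)" and h2: "derivable G (Imp (Neg a) b)"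
  have 1: "derivable G (Imp (Neg b) (Neg (Neg a)))" using MP[OF contrapos h2] .
  have 2: "derivable G (Imp (Neg b) (Neg a))" using MP[OF contrapos h1] .
  show ?thesis using MP[OF MP[OF A3' 1] 2] .
qed

lemma compact: "derivable G a \<Longrightarrow> \<exists>F. finite F \<and> F \<subseteq> G \<and> derivable F a"
proof (induction rule: derivable.induct)
  case (hyp a \<Gamma>)
  have "derivable {a} a" by (rule HY) simp
  then show ?case using hyp by (intro exI[of _ "{a}"]) auto
next
  case (ax a \<Gamma>)
  then have "derivable {} a" by (rule AX)
  then show ?case by (intro exI[of _ "{}"]) auto
next
  case (mp \<Gamma> a b)
  then obtain F1 F2 where "finite F1" "F1 \<subseteq> \<Gamma>" "derivable F1 a"
     "finite F2" "F2 \<subseteq> \<Gamma>" "derivable F2 (Imp a b)" by blast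
  then have "derivable (F1 \<union> F2) a" "derivable (F1 \<union> F2) (Imp a b)"
    by (auto elim!: mono)
  then have "derivable (F1 \<union> F2) b" by (rule MP[rotated])
  then show ?case using \<open>finite F1\<close> \<open>finite F2\<close> \<open>F1 \<subseteq> \<Gamma>\<close> \<open>F2 \<subseteq> \<Gamma>\<close>
    by (intro exI[of _ "F1 \<union> F2"]) auto
qed

lemma lindenbaum:
  assumes "\<not> derivable G c"
  shows "\<exists>D. G \<subseteq> D \<and> \<not> derivable D c \<and> (\<forall>X. G \<subseteq> X \<and> \<not> derivable X c \<longrightarrow> D \<subseteq> X \<longrightarrow> X = D)"
proof -
  define A where "A = {D. G \<subseteq> D \<and> \<not> derivable D c}"
  have "\<exists>M\<in>A. \<forall>X\<in>A. M \<subseteq> X \<longrightarrow> X = M"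
  proof (rule subset_Zorn_nonempty)
    have "G \<in> A" unfolding A_def using assms by simp
    then show "A \<noteq> {}" by auto
  next
    fix C assume C: "C \<noteq> {}" "subset.chain A C"
    have CA: "C \<subseteq> A" using C(2) unfolding subset.chain_def by (rule conjunct1)
    obtain B0 where "B0 \<in> C" using C(1) by auto
    then have "G \<subseteq> B0" using CA unfolding A_def by auto
    then have "G \<subseteq> \<Union>C" using \<open>B0 \<in> C\<close> by auto
    moreover have "\<not> derivable (\<Union>C) c"
    proof
      assume "derivable (\<Union>C) c"
      then obtain F where F: "finite F" "F \<subseteq> \<Union>C" "derivable F c" by (metis compact)
      obtain B where B: "B \<in> C" "F \<subseteq> B" using finite_subset_Union_chain[OF F(1) F(2) C(1) C(2)] by metis
      have "derivable B c" using mono[OF F(3) B(2)] .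
      moreover have "B \<in> A" using B(1) CA by auto
      ultimately show False unfolding A_def by auto
    qed
    ultimately show "\<Union>C \<in> A" unfolding A_def by auto
  qed
  then obtain M where M: "M \<in> A" "\<And>X. X \<in> A \<Longrightarrow> M \<subseteq> X \<Longrightarrow> X = M" by metis
  show ?thesis
    apply (rule exI[of _ M])
    using M unfolding A_def by simp
qed

locale maxcons =
  fixes D c
  assumes nd: "\<not> derivable D c"
  and mx: "\<And>X. D \<subseteq> X \<Longrightarrow> \<not> derivable X c \<Longrightarrow> X = D"
begin

lemma closed: "derivable D a \<Longrightarrow> a \<in> D"
proof (rule ccontr)
  assume a: "derivable D a" "a \<notin> D"
  then have "derivable (insert a D) c" using mx[of "insert a D"] by auto
  then have "derivable D (Imp a c)" by (rule DT)
  then have "derivable D c" using a(1) by (rule MP)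
  then show False using nd by simp
qed

lemma ax_in: "Ax a \<Longrightarrow> a \<in> D" by (rule closed, rule AX)

lemma mp_in: "Imp a b \<in> D \<Longrightarrow> a \<in> D \<Longrightarrow> b \<in> D"
  by (rule closed, rule MP, erule HY, erule HY)

lemma neg_in: "(Neg a \<in> D) \<longleftrightarrow> a \<notin> D"
proof
  assume na: "Neg a \<in> D"
  show "a \<notin> D"
  proof
    assume "a \<in> D"
    have "derivable D (Imp a c)" by (rule MP[OF neg_imp], rule HY, rule na)
    then have "derivable D c" using HY[OF \<open>a \<in> D\<close>] by (rule MP)
    then show False using nd by simp
  qed
next
  assume "a \<notin> D"
  show "Neg a \<in> D"
  proof (rule ccontr)
    assume "Neg a \<notin> D"
    have "derivable (insert a D) c" using mx[of "insert a D"] \<open>a \<notin> D\<close> by auto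
    then have 1: "derivable D (Imp a c)" by (rule DT)
    have "derivable (insert (Neg a) D) c" using mx[of "insert (Neg a) D"] \<open>Neg a \<notin> D\<close> by auto
    then have 2: "derivable D (Imp (Neg a) c)" by (rule DT)
    have "derivable D c" by (rule cases_lem[OF 1 2])
    then show False using nd by simp
  qed
qed

lemma imp_in: "(Imp a b \<in> D) \<longleftrightarrow> (a \<notin> D \<or> b \<in> D)"
proof
  assume "Imp a b \<in> D" then show "a \<notin> D \<or> b \<in> D" using mp_in by metis
next
  assume "a \<notin> D \<or> b \<in> D"
  then show "Imp a b \<in> D"
  proof
    assume "a \<notin> D"
    then have "Neg a \<in> D" using neg_in by simp
    show ?thesis by (rule closed, rule MP[OF neg_imp], rule HY, fact)
  next
    assume "b \<in> D" show ?thesis by (rule closed, rule MP[OF A1'], rule HY, fact)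
  qed
qed

lemma dia_in: "Dia a \<in> D \<longleftrightarrow> Box (Neg a) \<notin> D"
  unfolding Dia_def using neg_in by blast

lemma ax_use: "Ax (Imp a b) \<Longrightarrow> a \<in> D \<Longrightarrow> b \<in> D"
  using ax_in mp_in by blast

definition val :: "fm \<Rightarrow> tv" where
  "val p = (if Box p \<in> D then Tp else if p \<in> D then Cp else if Box (Neg p) \<in> D then Fm else Cm)"

lemma box_T: "Box p \<in> D \<Longrightarrow> p \<in> D" using ax_use[OF Ax.T] by blast

lemma val_des: "val p \<in> designated \<longleftrightarrow> p \<in> D"
  unfolding val_def designated_def using box_T neg_in by auto

lemma val_valuation: "valuation val"
  unfolding valuation_def
proof (intro conjI allI)
  fix a
  show "val (Neg a) \<in> negM (val a)"
  proof -
    have dn1: "Box a \<in> D \<Longrightarrow> Box (Neg (Neg a)) \<in> D" using ax_use[OF Ax.DN1] by blast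
    have dn2: "Box (Neg (Neg a)) \<in> D \<Longrightarrow> Box a \<in> D" using ax_use[OF Ax.DN2] by blast
    have t1: "Box (Neg a) \<in> D \<Longrightarrow> Neg a \<in> D" by (rule box_T)
    show ?thesis unfolding negM_def val_def using dn1 dn2 t1 neg_in[of a] box_T[of a] by auto
  qed
next
  fix a
  show "val (Box a) \<in> boxM (val a)"
    unfolding boxM_def val_def using box_T[of "Box a"] neg_in[of "Box a"] box_T[of "Neg (Box a)"]
    by auto
next
  fix a b
  have Tp_iff: "Box (Imp a b) \<in> D \<longleftrightarrow> (Box (Neg a) \<in> D \<or> Box b \<in> D)"
  proof
    assume h: "Box (Imp a b) \<in> D"
    show "Box (Neg a) \<in> D \<or> Box b \<in> D"
    proof (cases "Box (Neg a) \<in> D")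
      case False
      then have "Dia a \<in> D" using dia_in by blast
      then have "Box b \<in> D" using h ax_use[OF Ax.Kdet[of a b]] mp_in by blast
      then show ?thesis by simp
    qed simp
  next
    assume "Box (Neg a) \<in> D \<or> Box b \<in> D"
    then show "Box (Imp a b) \<in> D"
    proof
      assume "Box (Neg a) \<in> D"
      then have "Neg (Dia a) \<in> D" using dia_in neg_in by blast
      then show ?thesis using ax_use[OF Ax.M1] by blast
    next
      assume "Box b \<in> D" then show ?thesis using ax_use[OF Ax.M2] by blast
    qed
  qed
  have Fm_iff: "Box (Neg (Imp a b)) \<in> D \<longleftrightarrow> (Box a \<in> D \<and> Box (Neg b) \<in> D)"
  proof
    assume h: "Box (Neg (Imp a b)) \<in> D"
    show "Box a \<in> D \<and> Box (Neg b) \<in> D"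
    proof (rule ccontr)
      assume "\<not> (Box a \<in> D \<and> Box (Neg b) \<in> D)"
      then consider "Box a \<notin> D" | "Box (Neg b) \<notin> D" by blast
      then have "Dia (Imp a b) \<in> D"
      proof cases
        case 1
        then have "Box (Neg (Neg a)) \<notin> D" using ax_use[OF Ax.DN2] by blast
        then have "Dia (Neg a) \<in> D" using dia_in by blast
        then show ?thesis using ax_use[OF Ax.M4] by blast
      next
        case 2
        then have "Dia b \<in> D" using dia_in by blast
        then show ?thesis using ax_use[OF Ax.M3] by blast
      qed
      then show False using h dia_in by blast
    qed
  next
    assume h: "Box a \<in> D \<and> Box (Neg b) \<in> D"
    show "Box (Neg (Imp a b)) \<in> D"
    proof (rule ccontr)
      assume "Box (Neg (Imp a b)) \<notin> D"
      then have "Dia (Imp a b) \<in> D" using dia_in by blast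
      then have "Dia b \<in> D" using h ax_use[OF Ax.K2[of a b]] mp_in by blast
      then show False using h dia_in by blast
    qed
  qed
  have I: "Imp a b \<in> D \<longleftrightarrow> (a \<notin> D \<or> b \<in> D)" by (rule imp_in)
  have ta: "Box a \<in> D \<Longrightarrow> a \<in> D" "Box (Neg a) \<in> D \<Longrightarrow> a \<notin> D"
    using box_T[of a] box_T[of "Neg a"] neg_in[of a] by auto
  have tb: "Box b \<in> D \<Longrightarrow> b \<in> D" "Box (Neg b) \<in> D \<Longrightarrow> b \<notin> D"
    using box_T[of b] box_T[of "Neg b"] neg_in[of b] by auto
  show "val (Imp a b) \<in> impM (val a) (val b)"
    unfolding impM_def val_def tmax_def using Tp_iff Fm_iff I ta tb
    by auto
qed

end

lemma val_props:
  assumes "valuation v"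
  shows "v (Neg a) = nneg (v a)" "v (Imp a b) = tmax (nneg (v a)) (v b)"
    "v (Box a) \<in> boxM (v a)"
  using assms unfolding valuation_def negM_def impM_def by auto

lemma box_cases:
  assumes "valuation v"
  shows "(v a = Tp \<and> (v (Box a) = Tp \<or> v (Box a) = Cp)) \<or> (v a \<noteq> Tp \<and> (v (Box a) = Cm \<or> v (Box a) = Fm))"
  using val_props(3)[OF assms, of a] unfolding boxM_def by (auto split: if_splits)

lemma ax_valid:
  assumes v: "valuation v" and "Ax p"
  shows "v p \<in> designated"
  using assms(2)
proof (cases rule: Ax.cases)
  case (A1 a b)
  then show ?thesis using val_props[OF v]
    by (cases "v a"; cases "v b"; simp add: tmax_def designated_def)
next
  case (A2 a b c)
  then show ?thesis using val_props[OF v]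
    by (cases "v a"; cases "v b"; cases "v c"; simp add: tmax_def designated_def)
next
  case (A3 b a)
  then show ?thesis using val_props[OF v]
    by (cases "v a"; cases "v b"; simp add: tmax_def designated_def)
next
  case (K a b)
  then show ?thesis using val_props[OF v] box_cases[OF v, of "Imp a b"] box_cases[OF v, of "a"] box_cases[OF v, of "b"]
    by (cases "v a"; cases "v b"; auto simp: Dia_def tmax_def designated_def)
next
  case (Kdet a b)
  then show ?thesis using val_props[OF v] box_cases[OF v, of "Imp a b"] box_cases[OF v, of "Neg a"] box_cases[OF v, of "b"]
    by (cases "v a"; cases "v b"; auto simp: Dia_def tmax_def designated_def)
next
  case (K2 a b)
  then show ?thesis using val_props[OF v] box_cases[OF v, of "Neg (Imp a b)"] box_cases[OF v, of "a"] box_cases[OF v, of "Neg b"]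
    by (cases "v a"; cases "v b"; auto simp: Dia_def tmax_def designated_def)
next
  case (M1 a b)
  then show ?thesis using val_props[OF v] box_cases[OF v, of "Neg a"] box_cases[OF v, of "Imp a b"]
    by (cases "v a"; cases "v b"; auto simp: Dia_def tmax_def designated_def)
next
  case (M2 b a)
  then show ?thesis using val_props[OF v] box_cases[OF v, of "b"] box_cases[OF v, of "Imp a b"]
    by (cases "v b"; cases "v a"; auto simp: Dia_def tmax_def designated_def)
next
  case (M3 b a)
  then show ?thesis using val_props[OF v] box_cases[OF v, of "Neg b"] box_cases[OF v, of "Neg (Imp a b)"]
    by (cases "v b"; cases "v a"; auto simp: Dia_def tmax_def designated_def)
next
  case (M4 a b)
  then show ?thesis using val_props[OF v] box_cases[OF v, of "Neg (Neg a)"] box_cases[OF v, of "Neg (Imp a b)"]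
    by (cases "v a"; cases "v b"; auto simp: Dia_def tmax_def designated_def)
next
  case (T a)
  then show ?thesis using val_props[OF v] box_cases[OF v, of "a"]
    by (cases "v a"; auto simp: Dia_def tmax_def designated_def)
next
  case (DN1 a)
  then show ?thesis using val_props[OF v] box_cases[OF v, of "a"] box_cases[OF v, of "Neg (Neg a)"]
    by (cases "v a"; auto simp: Dia_def tmax_def designated_def)
next
  case (DN2 a)
  then show ?thesis using val_props[OF v] box_cases[OF v, of "a"] box_cases[OF v, of "Neg (Neg a)"]
    by (cases "v a"; auto simp: Dia_def tmax_def designated_def)
qed


lemma sound:
  assumes v: "valuation v"
  shows "derivable G p \<Longrightarrow> (\<forall>g\<in>G. v g \<in> designated) \<Longrightarrow> v p \<in> designated"
proof (induction rule: derivable.induct)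
  case (hyp a \<Gamma>)
  then show ?case by simp
next
  case (ax a \<Gamma>)
  then show ?case using ax_valid[OF v] by simp
next
  case (mp \<Gamma> a b)
  then have "v a \<in> designated" "v (Imp a b) \<in> designated" by simp_all
  then show ?case using val_props(2)[OF v, of a b]
    by (cases "v a"; cases "v b"; simp add: tmax_def designated_def)
qed

lemma complete:
  assumes e: "entails G p"
  shows "derivable G p"
proof (rule ccontr)
  assume n: "\<not> derivable G p"
  obtain D where D: "G \<subseteq> D" "\<not> derivable D p"
    "\<And>X. G \<subseteq> X \<and> \<not> derivable X p \<Longrightarrow> D \<subseteq> X \<Longrightarrow> X = D"
    using lindenbaum[OF n] by metis
  interpret m: maxcons D p
  proof
    show "\<not> derivable D p" by (rule D(2))
  next
    fix X assume "D \<subseteq> X" "\<not> derivable X p"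
    then show "X = D" using D(1) D(3)[of X] by auto
  qed
  have "\<forall>g\<in>G. m.val g \<in> designated" using D(1) m.val_des by auto
  then have "m.val p \<in> designated" using e m.val_valuation unfolding entails_def by blast
  then have "p \<in> D" using m.val_des by simp
  then show False using D(2) HY by metis
qed

theorem mainTheorem6:
  fixes \<Gamma> :: "fm set" and \<alpha> :: fm
  shows "\<Gamma> \<turnstile>\<^sub>T\<^sub>m\<^sub>d \<alpha> \<longleftrightarrow> \<Gamma> \<Turnstile>\<^sub>M \<alpha>"
proof
  assume "\<Gamma> \<turnstile>\<^sub>T\<^sub>m\<^sub>d \<alpha>"
  then show "\<Gamma> \<Turnstile>\<^sub>M \<alpha>" unfolding entails_def using sound by blast
next
  assume "\<Gamma> \<Turnstile>\<^sub>M \<alpha>"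
  then show "\<Gamma> \<turnstile>\<^sub>T\<^sub>m\<^sub>d \<alpha>" by (rule complete)
qed

end
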